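(* Let $\mathcal{G}$ be a finite subset of $\mathrm{U}(d)$, let $\nu_\mathcal{G}$ and $\nu_{\mathcal{G}^\dagger}$ be the uniform probability measures on $\mathcal{G}$ and on $\mathcal{G}^\dagger=\{U^\dagger:U\in\mathcal{G}\}$, and let $\nu_{\mathcal{G}\mathcal{G}^\dagger}=\nu_\mathcal{G}*\nu_{\mathcal{G}^\dagger}$. Then for every positive integer $t$, $$\delta(\nu_\mathcal{G},t)^2=\delta(\nu_{\mathcal{G}\mathcal{G}^\dagger},t)\quad\text{and}\quad \tfrac12\,g(\nu_\mathcal{G}*\nu_{\mathcal{G}^\dagger},t)\le g(\nu_\mathcal{G},t)\le g(\nu_\mathcal{G}*\nu_{\mathcal{G}^\dagger},t).$$
   Context: For a probability measure $\nu$ on $\mathrm{U}(d)$: $T_{\nu,t}=\int\mathrm{d}\nu(U)\,U^{\otimes t}\otimes\bar U^{\otimes t}$, $\delta(\nu,t)=\|T_{\nu,t}-T_{\mu,t}\|_\infty$ with $\mu$ the Haar measure, and $g(\nu,t)=1-\delta(\nu,t)$. $*$ denotes convolution of measures (distribution of the product of independent samples). *)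

theory Defs
  imports "HOL-Analysis.Analysis" "HOL-Probability.Probability"
begin

text \<open>d x d complex matrices; the dimension d is the cardinality of the finite index type 'd.\<close>
type_synonym 'd cmat = "complex^'d^'d"

definition adjoint :: "'d::finite cmat \<Rightarrow> 'd cmat" where
  "adjoint U = (\<chi> i j. cnj (U $ j $ i))"

definition unitary_group :: "'d::finite cmat set" where
  "unitary_group = {U. U ** adjoint U = mat 1}"

text \<open>Basis index set of (C^d)^{\<otimes> 2t}: words of length 2t over 'd.
  The first t letters index the factors U^{\<otimes> t}, the last t letters the factors conj(U)^{\<otimes> t}.\<close>
definition idx :: "nat \<Rightarrow> 'd::finite list set" where
  "idx t = {xs. length xs = 2 * t}"

text \<open>Matrix entry of U^{\<otimes> t} \<otimes> conj(U)^{\<otimes> t} in the standard product basis (Kronecker product).\<close>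
definition tensor_entry :: "nat \<Rightarrow> 'd::finite cmat \<Rightarrow> 'd list \<Rightarrow> 'd list \<Rightarrow> complex" where
  "tensor_entry t U is js =
     (\<Prod>k<t. U $ (is ! k) $ (js ! k)) * (\<Prod>k<t. cnj (U $ (is ! (t + k)) $ (js ! (t + k))))"

definition T_op :: "'d::finite cmat measure \<Rightarrow> nat \<Rightarrow> 'd list \<Rightarrow> 'd list \<Rightarrow> complex" where
  "T_op \<nu> t is js = (LINT U|\<nu>. tensor_entry t U is js)"

definition op_norm :: "'i set \<Rightarrow> ('i \<Rightarrow> 'i \<Rightarrow> complex) \<Rightarrow> real" where
  "op_norm I A = Sup {sqrt (\<Sum>i\<in>I. (cmod (\<Sum>j\<in>I. A i j * v j))\<^sup>2) | v.
                        (\<Sum>j\<in>I. (cmod (v j))\<^sup>2) \<le> 1}"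

definition is_haar :: "'d::finite cmat measure \<Rightarrow> bool" where
  "is_haar \<mu> \<longleftrightarrow> prob_space \<mu> \<and> sets \<mu> = sets borel \<and>
     emeasure \<mu> unitary_group = 1 \<and>
     (\<forall>V\<in>unitary_group. distr \<mu> borel (\<lambda>U. V ** U) = \<mu> \<and> distr \<mu> borel (\<lambda>U. U ** V) = \<mu>)"

definition delta :: "'d::finite cmat measure \<Rightarrow> 'd cmat measure \<Rightarrow> nat \<Rightarrow> real" where
  "delta \<mu> \<nu> t = op_norm (idx t) (\<lambda>is js. T_op \<nu> t is js - T_op \<mu> t is js)"

definition gap :: "'d::finite cmat measure \<Rightarrow> 'd cmat measure \<Rightarrow> nat \<Rightarrow> real" where
  "gap \<mu> \<nu> t = 1 - delta \<mu> \<nu> t"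

definition unif :: "'d::finite cmat set \<Rightarrow> 'd cmat pmf" where
  "unif G = pmf_of_set G"

definition conv :: "'d::finite cmat pmf \<Rightarrow> 'd cmat pmf \<Rightarrow> 'd cmat pmf" where
  "conv p q = map_pmf (\<lambda>(U, V). U ** V) (pair_pmf p q)"

end

theory Submission
  imports Defs
begin


definition mm :: "'i set \<Rightarrow> ('i \<Rightarrow> 'i \<Rightarrow> complex) \<Rightarrow> ('i \<Rightarrow> 'i \<Rightarrow> complex) \<Rightarrow> 'i \<Rightarrow> 'i \<Rightarrow> complex"
  where "mm I X Y = (\<lambda>i j. \<Sum>k\<in>I. X i k * Y k j)"
definition adj :: "('i \<Rightarrow> 'i \<Rightarrow> complex) \<Rightarrow> 'i \<Rightarrow> 'i \<Rightarrow> complex"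
  where "adj X = (\<lambda>i j. cnj (X j i))"
definition mv :: "'i set \<Rightarrow> ('i \<Rightarrow> 'i \<Rightarrow> complex) \<Rightarrow> ('i \<Rightarrow> complex) \<Rightarrow> 'i \<Rightarrow> complex"
  where "mv I X v = (\<lambda>i. \<Sum>j\<in>I. X i j * v j)"
definition vn :: "'i set \<Rightarrow> ('i \<Rightarrow> complex) \<Rightarrow> real"
  where "vn I v = L2_set (\<lambda>i. cmod (v i)) I"
definition ip :: "'i set \<Rightarrow> ('i \<Rightarrow> complex) \<Rightarrow> ('i \<Rightarrow> complex) \<Rightarrow> complex"
  where "ip I v w = (\<Sum>i\<in>I. cnj (v i) * w i)"

lemma adj_adj[simp]: "adj (adj X) = X"
  by (simp add: adj_def)

lemma vn_nonneg[simp]: "0 \<le> vn I v"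
  by (simp add: vn_def)

lemma vn_sq: "(vn I v)\<^sup>2 = (\<Sum>i\<in>I. (cmod (v i))\<^sup>2)"
  by (simp add: vn_def L2_set_def sum_nonneg)

lemma op_norm_alt: "op_norm I A = Sup {vn I (mv I A v) | v. vn I v \<le> 1}"
proof -
  have "\<And>v. ((\<Sum>j\<in>I. (cmod (v j))\<^sup>2) \<le> 1) = (vn I v \<le> 1)"
    by (simp add: vn_def L2_set_def)
  moreover have "\<And>v. sqrt (\<Sum>i\<in>I. (cmod (\<Sum>j\<in>I. A i j * v j))\<^sup>2) = vn I (mv I A v)"
    by (simp add: vn_def L2_set_def mv_def)
  ultimately show ?thesis unfolding op_norm_def by simp
qed

lemma ip_self: "ip I v v = of_real ((vn I v)\<^sup>2)"
  unfolding ip_def vn_sq of_real_sum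
  by (rule sum.cong[OF refl]) (metis complex_norm_square mult.commute)

lemma ip_adj:
  assumes "finite I"
  shows "ip I (mv I X v) w = ip I v (mv I (adj X) w)"
proof -
  have "ip I (mv I X v) w = (\<Sum>i\<in>I. \<Sum>j\<in>I. cnj (X i j) * cnj (v j) * w i)"
    by (simp add: ip_def mv_def sum_distrib_right sum_distrib_left mult_ac)
  also have "\<dots> = (\<Sum>j\<in>I. \<Sum>i\<in>I. cnj (X i j) * cnj (v j) * w i)"
    by (rule sum.swap)
  also have "\<dots> = ip I v (mv I (adj X) w)"
    by (simp add: ip_def mv_def adj_def sum_distrib_left mult_ac)
  finally show ?thesis .
qed

lemma ip_cs: "cmod (ip I v w) \<le> vn I v * vn I w"
proof -
  have "cmod (ip I v w) \<le> (\<Sum>i\<in>I. cmod (cnj (v i) * w i))"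
    unfolding ip_def by (rule norm_sum)
  also have "\<dots> = (\<Sum>i\<in>I. \<bar>cmod (v i)\<bar> * \<bar>cmod (w i)\<bar>)"
    by (simp add: norm_mult)
  also have "\<dots> \<le> vn I v * vn I w"
    unfolding vn_def by (rule L2_set_mult_ineq)
  finally show ?thesis .
qed

lemma vn_cong: "(\<And>i. i \<in> I \<Longrightarrow> v i = w i) \<Longrightarrow> vn I v = vn I w"
  unfolding vn_def by (rule L2_set_cong) auto

lemma mv_mm: "finite I \<Longrightarrow> mv I (mm I X Y) v = mv I X (mv I Y v)"
proof
  fix i assume "finite I"
  have "mv I (mm I X Y) v i = (\<Sum>j\<in>I. \<Sum>k\<in>I. X i k * Y k j * v j)"
    by (simp add: mv_def mm_def sum_distrib_right)
  also have "\<dots> = (\<Sum>k\<in>I. \<Sum>j\<in>I. X i k * Y k j * v j)" by (rule sum.swap)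
  also have "\<dots> = mv I X (mv I Y v) i"
    by (simp add: mv_def sum_distrib_left mult_ac)
  finally show "mv I (mm I X Y) v i = mv I X (mv I Y v) i" .
qed

lemma vn_scale: "vn I (\<lambda>i. of_real c * v i) = \<bar>c\<bar> * vn I v"
  unfolding vn_def by (simp add: norm_mult L2_set_right_distrib)

lemma vn_zero: "finite I \<Longrightarrow> vn I v = 0 \<Longrightarrow> i \<in> I \<Longrightarrow> v i = 0"
  unfolding vn_def using L2_set_eq_0_iff by fastforce

lemma comp_le_vn: "finite I \<Longrightarrow> i \<in> I \<Longrightarrow> cmod (v i) \<le> vn I v"
  unfolding vn_def by (rule member_le_L2_set)

lemma op_bdd:
  assumes "finite I"
  shows "bdd_above {vn I (mv I A v) | v. vn I v \<le> 1}"
proof (rule bdd_aboveI)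
  fix x assume "x \<in> {vn I (mv I A v) | v. vn I v \<le> 1}"
  then obtain v where x: "x = vn I (mv I A v)" and v: "vn I v \<le> 1" by auto
  have "x \<le> (\<Sum>i\<in>I. cmod (mv I A v i))"
    unfolding x vn_def by (rule L2_set_le_sum) simp
  also have "\<dots> \<le> (\<Sum>i\<in>I. \<Sum>j\<in>I. cmod (A i j))"
  proof (rule sum_mono)
    fix i assume "i \<in> I"
    have "cmod (mv I A v i) \<le> (\<Sum>j\<in>I. cmod (A i j * v j))"
      unfolding mv_def by (rule norm_sum)
    also have "\<dots> \<le> (\<Sum>j\<in>I. cmod (A i j))"
    proof (rule sum_mono)
      fix j assume "j \<in> I"
      have "cmod (v j) \<le> 1" using comp_le_vn[OF assms \<open>j \<in> I\<close>, of v] v by simp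
      then show "cmod (A i j * v j) \<le> cmod (A i j)"
        by (simp add: norm_mult mult_left_le)
    qed
    finally show "cmod (mv I A v i) \<le> (\<Sum>j\<in>I. cmod (A i j))" .
  qed
  finally show "x \<le> (\<Sum>i\<in>I. \<Sum>j\<in>I. cmod (A i j))" .
qed

lemma op_norm_nonneg:
  assumes "finite I" shows "0 \<le> op_norm I A"
proof -
  have "vn I (mv I A (\<lambda>_. 0)) \<in> {vn I (mv I A v) | v. vn I v \<le> 1}"
    by (auto simp: vn_def L2_set_def)
  then have "vn I (mv I A (\<lambda>_. 0)) \<le> op_norm I A"
    unfolding op_norm_alt by (rule cSup_upper[OF _ op_bdd[OF assms]])
  then show ?thesis by (rule order_trans[OF vn_nonneg])
qed

lemma op_norm_bound:
  assumes "finite I" shows "vn I (mv I A v) \<le> op_norm I A * vn I v"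
proof (cases "vn I v = 0")
  case True
  then have z: "\<And>i. i \<in> I \<Longrightarrow> v i = 0" by (rule vn_zero[OF assms])
  have "mv I A v i = 0" for i unfolding mv_def using z by simp
  then have "vn I (mv I A v) = 0"
    by (simp add: vn_def L2_set_0')
  then show ?thesis using True by simp
next
  case False
  then have pos: "vn I v > 0" using vn_nonneg[of I v] by linarith
  define w where "w = (\<lambda>i. of_real (1 / vn I v) * v i)"
  have "vn I w = 1" unfolding w_def vn_scale using pos by simp
  then have "vn I (mv I A w) \<in> {vn I (mv I A v) | v. vn I v \<le> 1}" by auto
  then have 1: "vn I (mv I A w) \<le> op_norm I A"
    unfolding op_norm_alt by (rule cSup_upper[OF _ op_bdd[OF assms]])
  have "mv I A w = (\<lambda>i. of_real (1 / vn I v) * mv I A v i)"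
    by (simp add: w_def mv_def sum_distrib_left mult_ac)
  then have "vn I (mv I A w) = \<bar>1 / vn I v\<bar> * vn I (mv I A v)"
    using vn_scale by metis
  then have "(1 / vn I v) * vn I (mv I A v) \<le> op_norm I A"
    using 1 pos by simp
  then show ?thesis using pos by (simp add: field_simps)
qed

lemma op_norm_least:
  assumes "finite I" "0 \<le> c" "\<And>v. vn I (mv I A v) \<le> c * vn I v"
  shows "op_norm I A \<le> c"
  unfolding op_norm_alt
proof (rule cSup_least)
  have "vn I (mv I A (\<lambda>_. 0)) \<in> {vn I (mv I A v) | v. vn I v \<le> 1}"
    by (auto simp: vn_def L2_set_def)
  then show "{vn I (mv I A v) | v. vn I v \<le> 1} \<noteq> {}" by blast
  fix x assume "x \<in> {vn I (mv I A v) | v. vn I v \<le> 1}"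
  then obtain v where x: "x = vn I (mv I A v)" and v: "vn I v \<le> 1" by auto
  have "x \<le> c * vn I v" using x assms(3) by simp
  also have "\<dots> \<le> c" using v assms(2) by (simp add: mult_left_le)
  finally show "x \<le> c" .
qed

lemma op_norm_cong:
  assumes "\<And>i j. i \<in> I \<Longrightarrow> j \<in> I \<Longrightarrow> A i j = B i j"
  shows "op_norm I A = op_norm I B"
proof -
  have "vn I (mv I A v) = vn I (mv I B v)" for v
  proof (rule vn_cong)
    fix i assume "i \<in> I"
    then show "mv I A v i = mv I B v i" unfolding mv_def using assms by (intro sum.cong) auto
  qed
  then show ?thesis unfolding op_norm_alt by simp
qed


lemma sq_le_lemma:
  fixes x c :: real
  assumes "x\<^sup>2 \<le> c * x" "0 \<le> x" "0 \<le> c"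
  shows "x \<le> c"
proof (cases "x = 0")
  case True
  then show ?thesis using assms by simp
next
  case False
  then have "x > 0" using assms by simp
  then show ?thesis using assms(1) by (simp add: power2_eq_square)
qed

lemma key_adj:
  assumes "finite I"
  shows "(vn I (mv I (adj X) v))\<^sup>2 \<le> vn I v * vn I (mv I X (mv I (adj X) v))"
proof -
  define w where "w = mv I (adj X) v"
  have "ip I w w = ip I v (mv I X w)"
    unfolding w_def by (subst ip_adj[OF assms]) simp
  moreover have "(vn I w)\<^sup>2 = Re (ip I w w)" by (simp add: ip_self)
  ultimately have "(vn I w)\<^sup>2 = Re (ip I v (mv I X w))" by simp
  also have "\<dots> \<le> cmod (ip I v (mv I X w))" by (rule complex_Re_le_cmod)
  also have "\<dots> \<le> vn I v * vn I (mv I X w)" by (rule ip_cs)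
  finally show ?thesis unfolding w_def .
qed

lemma adj_norm_le:
  assumes "finite I"
  shows "op_norm I (adj B) \<le> op_norm I B"
proof (rule op_norm_least[OF assms op_norm_nonneg[OF assms]])
  fix v
  have "(vn I (mv I (adj B) v))\<^sup>2 \<le> vn I v * vn I (mv I B (mv I (adj B) v))"
    by (rule key_adj[OF assms])
  also have "\<dots> \<le> vn I v * (op_norm I B * vn I (mv I (adj B) v))"
    by (rule mult_left_mono[OF op_norm_bound[OF assms] vn_nonneg])
  finally have "(vn I (mv I (adj B) v))\<^sup>2 \<le> (op_norm I B * vn I v) * vn I (mv I (adj B) v)"
    by (simp only: mult_ac)
  then show "vn I (mv I (adj B) v) \<le> op_norm I B * vn I v"
    by (rule sq_le_lemma) (simp_all add: op_norm_nonneg[OF assms])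
qed

lemma adj_norm_eq:
  assumes "finite I"
  shows "op_norm I (adj B) = op_norm I B"
  using adj_norm_le[OF assms, of B] adj_norm_le[OF assms, of "adj B"] by simp

lemma cstar:
  assumes "finite I"
  shows "(op_norm I B)\<^sup>2 = op_norm I (mm I B (adj B))"
proof -
  define n where "n = op_norm I B"
  define m where "m = op_norm I (mm I B (adj B))"
  have n0: "0 \<le> n" and m0: "0 \<le> m" unfolding n_def m_def by (simp_all add: op_norm_nonneg assms)
  have "op_norm I (adj B) \<le> sqrt m"
  proof (rule op_norm_least[OF assms])
    show "0 \<le> sqrt m" using m0 by simp
    fix v
    have "(vn I (mv I (adj B) v))\<^sup>2 \<le> vn I v * vn I (mv I B (mv I (adj B) v))"
      by (rule key_adj[OF assms])
    also have "mv I B (mv I (adj B) v) = mv I (mm I B (adj B)) v"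
      by (simp add: mv_mm assms)
    also have "vn I v * vn I (mv I (mm I B (adj B)) v) \<le> vn I v * (m * vn I v)"
      unfolding m_def by (rule mult_left_mono[OF op_norm_bound[OF assms] vn_nonneg])
    also have "\<dots> = (sqrt m * vn I v)\<^sup>2" using m0 by (simp add: power2_eq_square mult_ac)
    finally have "(vn I (mv I (adj B) v))\<^sup>2 \<le> (sqrt m * vn I v)\<^sup>2" .
    then show "vn I (mv I (adj B) v) \<le> sqrt m * vn I v"
      by (rule power2_le_imp_le) (simp add: m0)
  qed
  then have "n \<le> sqrt m" using adj_norm_eq[OF assms, of B] n_def by simp
  then have "n\<^sup>2 \<le> (sqrt m)\<^sup>2" using n0 by (intro power_mono)
  then have 1: "n\<^sup>2 \<le> m" using m0 by simp
  have "m \<le> n * n"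
    unfolding m_def
  proof (rule op_norm_least[OF assms])
    show "0 \<le> n * n" using n0 by simp
    fix v
    have "vn I (mv I (mm I B (adj B)) v) = vn I (mv I B (mv I (adj B) v))"
      by (simp add: mv_mm assms)
    also have "\<dots> \<le> n * vn I (mv I (adj B) v)"
      unfolding n_def by (rule op_norm_bound[OF assms])
    also have "\<dots> \<le> n * (n * vn I v)"
      using op_norm_bound[OF assms, of "adj B" v] adj_norm_eq[OF assms, of B] n0
      unfolding n_def by (intro mult_left_mono) simp_all
    finally show "vn I (mv I (mm I B (adj B)) v) \<le> n * n * vn I v" by (simp add: mult_ac)
  qed
  then show ?thesis using 1 unfolding n_def m_def by (simp add: power2_eq_square)
qed

lemma mv_cong:
  assumes "\<And>i j. i \<in> I \<Longrightarrow> j \<in> I \<Longrightarrow> X i j = Y i j" "i \<in> I"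
  shows "mv I X v i = mv I Y v i"
  unfolding mv_def using assms by (intro sum.cong) auto

lemma ip_cong:
  assumes "\<And>i. i \<in> I \<Longrightarrow> v i = v' i" "\<And>i. i \<in> I \<Longrightarrow> w i = w' i"
  shows "ip I v w = ip I v' w'"
  unfolding ip_def using assms by (intro sum.cong) auto

lemma ip_sym: "ip I w v = cnj (ip I v w)"
  by (simp add: ip_def mult.commute)

lemma ip_diff: "ip I (\<lambda>i. a i - b i) (\<lambda>i. c i - d i) = ip I a c - ip I a d - ip I b c + ip I b d"
  by (simp add: ip_def algebra_simps sum_subtractf sum.distrib)

lemma proj_main:
  assumes fin: "finite I"
    and PP: "\<And>i j. i \<in> I \<Longrightarrow> j \<in> I \<Longrightarrow> mm I (adj P) P i j = P i j"
    and AP: "\<And>i j. i \<in> I \<Longrightarrow> j \<in> I \<Longrightarrow> mm I A P i j = P i j"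
    and PA: "\<And>i j. i \<in> I \<Longrightarrow> j \<in> I \<Longrightarrow> mm I P (adj A) i j = P i j"
    and Ac: "\<And>v. vn I (mv I A v) \<le> vn I v"
  shows "(op_norm I (\<lambda>i j. A i j - P i j))\<^sup>2 = op_norm I (\<lambda>i j. mm I A (adj A) i j - P i j)
         \<and> op_norm I (\<lambda>i j. A i j - P i j) \<le> 1"
proof
  define B where "B = (\<lambda>i j. A i j - P i j)"
  have Ph: "cnj (P j i) = P i j" if "i \<in> I" "j \<in> I" for i j
  proof -
    have "cnj (P j i) = cnj (mm I (adj P) P j i)" using PP that by simp
    also have "\<dots> = mm I (adj P) P i j"
      by (simp add: mm_def adj_def mult.commute)
    also have "\<dots> = P i j" using PP that by simp
    finally show ?thesis .
  qed
  have "mm I B (adj B) i j = mm I A (adj A) i j - P i j" if "i \<in> I" "j \<in> I" for i j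
  proof -
    have e1: "(\<Sum>k\<in>I. A i k * cnj (P j k)) = P i j"
      using AP[OF that] Ph that by (simp add: mm_def)
    have e2: "(\<Sum>k\<in>I. P i k * cnj (A j k)) = P i j"
      using PA[OF that] by (simp add: mm_def adj_def)
    have "(\<Sum>k\<in>I. P i k * cnj (P j k)) = (\<Sum>k\<in>I. cnj (P k i) * P k j)"
      using Ph that by (intro sum.cong) (auto simp: mult.commute)
    also have "\<dots> = P i j" using PP[OF that] by (simp add: mm_def adj_def)
    finally have e3: "(\<Sum>k\<in>I. P i k * cnj (P j k)) = P i j" .
    have "mm I B (adj B) i j = (\<Sum>k\<in>I. A i k * cnj (A j k) - A i k * cnj (P j k)
         - P i k * cnj (A j k) + P i k * cnj (P j k))"
      unfolding mm_def adj_def B_def by (intro sum.cong) (simp_all add: algebra_simps)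
    also have "\<dots> = (\<Sum>k\<in>I. A i k * cnj (A j k)) - (\<Sum>k\<in>I. A i k * cnj (P j k))
         - (\<Sum>k\<in>I. P i k * cnj (A j k)) + (\<Sum>k\<in>I. P i k * cnj (P j k))"
      by (simp only: sum.distrib sum_subtractf)
    finally have "mm I B (adj B) i j = (\<Sum>k\<in>I. A i k * cnj (A j k)) - (\<Sum>k\<in>I. A i k * cnj (P j k))
         - (\<Sum>k\<in>I. P i k * cnj (A j k)) + (\<Sum>k\<in>I. P i k * cnj (P j k))" .
    then show ?thesis using e1 e2 e3 by (simp add: mm_def adj_def)
  qed
  then have "op_norm I (mm I B (adj B)) = op_norm I (\<lambda>i j. mm I A (adj A) i j - P i j)"
    by (intro op_norm_cong) auto
  then show "(op_norm I (\<lambda>i j. A i j - P i j))\<^sup>2 = op_norm I (\<lambda>i j. mm I A (adj A) i j - P i j)"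
    using cstar[OF fin, of B] unfolding B_def by simp
  show "op_norm I (\<lambda>i j. A i j - P i j) \<le> 1"
  proof (rule op_norm_least[OF fin])
    fix v
    define Pv where "Pv = mv I P v"
    define u where "u = (\<lambda>i. v i - Pv i)"
    have "mv I A Pv i = mv I (mm I A P) v i" if "i \<in> I" for i
      unfolding Pv_def by (simp add: mv_mm fin)
    also have "mv I (mm I A P) v i = Pv i" if "i \<in> I" for i
      unfolding Pv_def by (rule mv_cong[OF AP that])
    finally have APv: "i \<in> I \<Longrightarrow> mv I A Pv i = Pv i" for i .
    have "mv I (\<lambda>i j. A i j - P i j) v i = mv I A u i" if "i \<in> I" for i
    proof -
      have "mv I A u i = mv I A v i - mv I A Pv i"
        by (simp add: mv_def u_def algebra_simps sum_subtractf)
      then show ?thesis using APv[OF that] by (simp add: mv_def Pv_def algebra_simps sum_subtractf)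
    qed
    then have "vn I (mv I (\<lambda>i j. A i j - P i j) v) = vn I (mv I A u)" by (rule vn_cong)
    also have "\<dots> \<le> vn I u" by (rule Ac)
    also have "\<dots> \<le> vn I v"
    proof -
      have "ip I Pv Pv = ip I v (mv I (adj P) Pv)"
        unfolding Pv_def by (rule ip_adj[OF fin])
      also have "\<dots> = ip I v (mv I (mm I (adj P) P) v)" unfolding Pv_def by (simp add: mv_mm fin)
      also have "\<dots> = ip I v Pv"
        unfolding Pv_def by (intro ip_cong mv_cong PP) auto
      finally have 1: "ip I v Pv = ip I Pv Pv" by simp
      have 2: "ip I Pv v = ip I Pv Pv" using 1 ip_sym[of I Pv v] ip_self[of I Pv] by simp
      have "ip I u u = ip I v v - ip I Pv Pv"
        unfolding u_def ip_diff 1 2 by simp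
      then have "(of_real ((vn I u)\<^sup>2) :: complex) = of_real ((vn I v)\<^sup>2 - (vn I Pv)\<^sup>2)"
        unfolding of_real_diff ip_self[symmetric] .
      then have "(vn I u)\<^sup>2 = (vn I v)\<^sup>2 - (vn I Pv)\<^sup>2"
        by (simp only: of_real_eq_iff)
      then have "(vn I u)\<^sup>2 \<le> (vn I v)\<^sup>2" by simp
      then show ?thesis by (rule power2_le_imp_le) simp
    qed
    finally show "vn I (mv I (\<lambda>i j. A i j - P i j) v) \<le> 1 * vn I v" by simp
  qed simp
qed



lemma finite_len: "finite {xs :: 'a::finite list. length xs = n}"
  using finite_lists_length_eq[of "UNIV :: 'a set" n] by simp

lemma sum_lists_prod:
  "(\<Sum>xs\<in>{xs :: 'a::finite list. length xs = n}. \<Prod>k<n. f k (xs ! k)) = (\<Prod>k<n. \<Sum>j\<in>UNIV. (f k j :: complex))"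
proof (induction n arbitrary: f)
  case 0
  then show ?case by simp
next
  case (Suc n)
  have im: "{xs :: 'a list. length xs = Suc n} = (\<lambda>(x, xs). x # xs) ` (UNIV \<times> {xs. length xs = n})"
    by (auto simp: length_Suc_conv image_iff)
  have inj: "inj_on (\<lambda>(x, xs). x # xs) (UNIV \<times> {xs :: 'a list. length xs = n})"
    by (auto simp: inj_on_def)
  have "(\<Sum>xs\<in>{xs :: 'a list. length xs = Suc n}. \<Prod>k<Suc n. f k (xs ! k))
      = (\<Sum>p\<in>UNIV \<times> {xs :: 'a list. length xs = n}. \<Prod>k<Suc n. f k ((fst p # snd p) ! k))"
    unfolding im by (subst sum.reindex[OF inj]) (simp add: case_prod_beta)
  also have "\<dots> = (\<Sum>x\<in>UNIV. \<Sum>xs\<in>{xs :: 'a list. length xs = n}. f 0 x * (\<Prod>k<n. f (Suc k) (xs ! k)))"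
    by (simp add: sum.cartesian_product prod.lessThan_Suc_shift case_prod_beta del: prod.lessThan_Suc)
  also have "\<dots> = (\<Sum>x\<in>UNIV. f 0 x) * (\<Sum>xs\<in>{xs :: 'a list. length xs = n}. \<Prod>k<n. f (Suc k) (xs ! k))"
    by (simp add: sum_product)
  also have "\<dots> = (\<Sum>x\<in>UNIV. f 0 x) * (\<Prod>k<n. \<Sum>j\<in>UNIV. f (Suc k) j)"
    using Suc.IH[of "\<lambda>k. f (Suc k)"] by simp
  also have "\<dots> = (\<Prod>k<Suc n. \<Sum>j\<in>UNIV. f k j)"
    by (simp add: prod.lessThan_Suc_shift del: prod.lessThan_Suc)
  finally show ?case .
qed

definition ent :: "nat \<Rightarrow> 'd::finite cmat \<Rightarrow> 'd list \<Rightarrow> 'd list \<Rightarrow> nat \<Rightarrow> complex" where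
  "ent t U is js k = (if k < t then U $ (is ! k) $ (js ! k) else cnj (U $ (is ! k) $ (js ! k)))"

lemma prod_split2:
  fixes g :: "nat \<Rightarrow> complex"
  shows "(\<Prod>k<2*t. g k) = (\<Prod>k<t. g k) * (\<Prod>k<t. g (t + k))"
proof -
  have "(\<Prod>k<2*t. g k) = prod g {0..<t} * prod g {t..<2*t}"
    by (simp add: atLeast0LessThan[symmetric] prod.atLeastLessThan_concat)
  also have "prod g {t..<2*t} = prod (\<lambda>k. g (k + t)) {0..<t}"
    using prod.shift_bounds_nat_ivl[of g 0 t t] by (simp add: mult_2)
  finally show ?thesis by (simp add: atLeast0LessThan add.commute)
qed

lemma tensor_ent: "tensor_entry t U is js = (\<Prod>k<2*t. ent t U is js k)"
  unfolding prod_split2 tensor_entry_def ent_def by simp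

lemma tensor_mult:
  "tensor_entry t (U ** V) is js = (\<Sum>ks\<in>idx t. tensor_entry t U is ks * tensor_entry t V ks js)"
proof -
  define f where "f k j = (if k < t then U $ (is ! k) $ j * V $ j $ (js ! k)
                   else cnj (U $ (is ! k) $ j) * cnj (V $ j $ (js ! k)))" for k j
  have "tensor_entry t (U ** V) is js = (\<Prod>k<2*t. \<Sum>j\<in>UNIV. f k j)"
    unfolding tensor_ent ent_def f_def by (intro prod.cong) (auto simp: matrix_matrix_mult_def)
  also have "\<dots> = (\<Sum>ks\<in>idx t. \<Prod>k<2*t. f k (ks ! k))"
    unfolding idx_def by (rule sum_lists_prod[symmetric])
  also have "\<dots> = (\<Sum>ks\<in>idx t. tensor_entry t U is ks * tensor_entry t V ks js)"
    unfolding tensor_ent ent_def f_def prod.distrib[symmetric]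
    by (intro sum.cong prod.cong) auto
  finally show ?thesis .
qed

lemma tensor_adj: "tensor_entry t (adjoint U) is js = cnj (tensor_entry t U js is)"
  by (simp add: tensor_entry_def adjoint_def mult.commute)

lemma tensor_id:
  assumes "is \<in> idx t" "js \<in> idx t"
  shows "tensor_entry t (mat 1) is js = (if is = js then 1 else 0)"
proof (cases "is = js")
  case True
  then show ?thesis unfolding tensor_ent ent_def by (simp add: mat_def cong: if_cong)
next
  case False
  then obtain k where k: "k < 2 * t" "is ! k \<noteq> js ! k"
    using assms by (auto simp: idx_def list_eq_iff_nth_eq)
  then have "ent t (mat 1) is js k = 0" by (simp add: ent_def mat_def)
  then have "(\<Prod>k<2*t. ent t (mat 1) is js k) = 0"
    using k by (intro prod_zero) auto
  then show ?thesis using False unfolding tensor_ent by simp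
qed

lemma unitary_left: "U \<in> unitary_group \<Longrightarrow> adjoint U ** U = mat 1"
  unfolding unitary_group_def using matrix_left_right_inverse by blast

lemma adjoint_adjoint[simp]: "adjoint (adjoint U) = U"
  by (simp add: adjoint_def vec_eq_iff)

lemma unitary_adjoint: "U \<in> unitary_group \<Longrightarrow> adjoint U \<in> unitary_group"
  using unitary_left unfolding unitary_group_def by simp

lemma unitary_entry:
  assumes "U \<in> unitary_group"
  shows "cmod (U $ i $ j) \<le> 1"
proof -
  have "(U ** adjoint U) $ i $ i = 1" using assms by (simp add: unitary_group_def mat_def)
  then have "(\<Sum>k\<in>UNIV. U $ i $ k * cnj (U $ i $ k)) = 1"
    by (simp add: matrix_matrix_mult_def adjoint_def)
  moreover have "(\<Sum>k\<in>UNIV. complex_of_real ((cmod (U $ i $ k))\<^sup>2)) = (\<Sum>k\<in>UNIV. U $ i $ k * cnj (U $ i $ k))"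
    by (rule sum.cong[OF refl]) (simp only: complex_norm_square)
  ultimately have "(\<Sum>k\<in>UNIV. complex_of_real ((cmod (U $ i $ k))\<^sup>2)) = 1" by simp
  then have s: "(\<Sum>k\<in>UNIV. (cmod (U $ i $ k))\<^sup>2) = 1"
    by (metis of_real_eq_1_iff of_real_sum)
  have "(cmod (U $ i $ j))\<^sup>2 \<le> (\<Sum>k\<in>UNIV. (cmod (U $ i $ k))\<^sup>2)"
    by (rule member_le_sum) auto
  then have "(cmod (U $ i $ j))\<^sup>2 \<le> 1\<^sup>2" using s by simp
  then show ?thesis by (rule power2_le_imp_le) simp
qed

lemma tensor_bound:
  assumes "U \<in> unitary_group"
  shows "cmod (tensor_entry t U is js) \<le> 1"
  unfolding tensor_entry_def norm_mult prod_norm[symmetric]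
  using unitary_entry[OF assms]
  by (intro mult_le_one prod_le_1) (auto simp: prod_nonneg)

lemma tensor_cont: "continuous_on UNIV (\<lambda>U::'d::finite cmat. tensor_entry t U is js)"
  unfolding tensor_entry_def by (intro continuous_intros)



lemma haar_basic:
  assumes "is_haar \<mu>"
  shows "prob_space \<mu>" "sets \<mu> = sets borel" "AE U in \<mu>. U \<in> unitary_group"
proof -
  show ps: "prob_space \<mu>" using assms unfolding is_haar_def by simp
  show "sets \<mu> = sets borel" using assms unfolding is_haar_def by simp
  have em: "emeasure \<mu> unitary_group = 1" using assms unfolding is_haar_def by simp
  then have mem: "unitary_group \<in> sets \<mu>" using emeasure_notin_sets by fastforce
  have "measure \<mu> unitary_group = 1" using em by (simp add: measure_def)
  then show "AE U in \<mu>. U \<in> unitary_group"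
    using prob_space.AE_in_set_eq_1[OF ps mem] by simp
qed

lemma tensor_meas:
  assumes "sets \<mu> = sets borel"
  shows "(\<lambda>U. tensor_entry t U is js) \<in> borel_measurable \<mu>"
proof -
  have "(\<lambda>U. tensor_entry t U is js) \<in> borel_measurable borel"
    by (rule borel_measurable_continuous_onI[OF tensor_cont])
  then show ?thesis unfolding measurable_cong_sets[OF assms refl] .
qed

lemma tensor_int:
  assumes "is_haar \<mu>"
  shows "integrable \<mu> (\<lambda>U. tensor_entry t U is js)"
proof -
  interpret prob_space \<mu> using haar_basic[OF assms] by simp
  have "AE U in \<mu>. norm (tensor_entry t U is js) \<le> 1"
    using haar_basic(3)[OF assms] by eventually_elim (rule tensor_bound)
  then show ?thesis
    by (rule integrable_const_bound) (rule tensor_meas[OF haar_basic(2)[OF assms]])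
qed

lemma mult_cont_left: "continuous_on UNIV (\<lambda>U::'d::finite cmat. V ** U)"
  unfolding matrix_matrix_mult_def by (intro continuous_intros)

lemma mult_cont_right: "continuous_on UNIV (\<lambda>U::'d::finite cmat. U ** V)"
  unfolding matrix_matrix_mult_def by (intro continuous_intros)

lemma finite_idx: "finite (idx t :: 'd::finite list set)"
  unfolding idx_def by (rule finite_len)

lemma haar_left:
  assumes "is_haar \<mu>" "V \<in> unitary_group"
  shows "(\<Sum>ks\<in>idx t. tensor_entry t V is ks * T_op \<mu> t ks js) = T_op \<mu> t is js"
proof -
  have sets: "sets \<mu> = sets borel" by (rule haar_basic(2)[OF assms(1)])
  have inv: "distr \<mu> borel (\<lambda>U. V ** U) = \<mu>" using assms unfolding is_haar_def by simp
  have meas: "(\<lambda>U. V ** U) \<in> measurable \<mu> borel"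
    unfolding measurable_cong_sets[OF sets refl] by (rule borel_measurable_continuous_onI[OF mult_cont_left])
  have "T_op \<mu> t is js = integral\<^sup>L (distr \<mu> borel (\<lambda>U. V ** U)) (\<lambda>U. tensor_entry t U is js)"
    unfolding T_op_def inv ..
  also have "\<dots> = integral\<^sup>L \<mu> (\<lambda>U. tensor_entry t (V ** U) is js)"
    by (rule integral_distr[OF meas borel_measurable_continuous_onI[OF tensor_cont]])
  also have "\<dots> = integral\<^sup>L \<mu> (\<lambda>U. \<Sum>ks\<in>idx t. tensor_entry t V is ks * tensor_entry t U ks js)"
    by (simp add: tensor_mult)
  also have "\<dots> = (\<Sum>ks\<in>idx t. integral\<^sup>L \<mu> (\<lambda>U. tensor_entry t V is ks * tensor_entry t U ks js))"
    using tensor_int[OF assms(1)] by (subst Bochner_Integration.integral_sum) auto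
  also have "\<dots> = (\<Sum>ks\<in>idx t. tensor_entry t V is ks * T_op \<mu> t ks js)"
    unfolding T_op_def by simp
  finally show ?thesis by simp
qed

lemma haar_right:
  assumes "is_haar \<mu>" "V \<in> unitary_group"
  shows "(\<Sum>ks\<in>idx t. T_op \<mu> t is ks * tensor_entry t V ks js) = T_op \<mu> t is js"
proof -
  have sets: "sets \<mu> = sets borel" by (rule haar_basic(2)[OF assms(1)])
  have inv: "distr \<mu> borel (\<lambda>U. U ** V) = \<mu>" using assms unfolding is_haar_def by simp
  have meas: "(\<lambda>U. U ** V) \<in> measurable \<mu> borel"
    unfolding measurable_cong_sets[OF sets refl] by (rule borel_measurable_continuous_onI[OF mult_cont_right])
  have "T_op \<mu> t is js = integral\<^sup>L (distr \<mu> borel (\<lambda>U. U ** V)) (\<lambda>U. tensor_entry t U is js)"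
    unfolding T_op_def inv ..
  also have "\<dots> = integral\<^sup>L \<mu> (\<lambda>U. tensor_entry t (U ** V) is js)"
    by (rule integral_distr[OF meas borel_measurable_continuous_onI[OF tensor_cont]])
  also have "\<dots> = integral\<^sup>L \<mu> (\<lambda>U. \<Sum>ks\<in>idx t. tensor_entry t U is ks * tensor_entry t V ks js)"
    by (simp add: tensor_mult)
  also have "\<dots> = (\<Sum>ks\<in>idx t. integral\<^sup>L \<mu> (\<lambda>U. tensor_entry t U is ks * tensor_entry t V ks js))"
    using tensor_int[OF assms(1)] by (subst Bochner_Integration.integral_sum) auto
  also have "\<dots> = (\<Sum>ks\<in>idx t. T_op \<mu> t is ks * tensor_entry t V ks js)"
    unfolding T_op_def by simp
  finally show ?thesis by simp
qed

lemma haar_PP: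
  assumes "is_haar \<mu>"
  shows "(\<Sum>ks\<in>idx t. cnj (T_op \<mu> t ks is) * T_op \<mu> t ks js) = T_op \<mu> t is js"
proof -
  interpret prob_space \<mu> using haar_basic[OF assms] by simp
  have sets: "sets \<mu> = sets borel" by (rule haar_basic(2)[OF assms(1)])
  have m[measurable]: "(\<lambda>U. tensor_entry t U a b) \<in> borel_measurable \<mu>" for a b
    by (rule tensor_meas[OF sets])
  have m2[measurable]: "(\<lambda>U. tensor_entry t (adjoint U) a b) \<in> borel_measurable \<mu>" for a b
    unfolding measurable_cong_sets[OF sets refl] tensor_adj
    by (rule borel_measurable_continuous_onI) (intro continuous_on_cnj tensor_cont)
  have "(\<Sum>ks\<in>idx t. cnj (T_op \<mu> t ks is) * T_op \<mu> t ks js)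
      = (\<Sum>ks\<in>idx t. integral\<^sup>L \<mu> (\<lambda>U. tensor_entry t (adjoint U) is ks * T_op \<mu> t ks js))"
    unfolding T_op_def tensor_adj by simp
  also have "\<dots> = integral\<^sup>L \<mu> (\<lambda>U. \<Sum>ks\<in>idx t. tensor_entry t (adjoint U) is ks * T_op \<mu> t ks js)"
    unfolding tensor_adj
    using tensor_int[OF assms(1)] by (subst Bochner_Integration.integral_sum) auto
  also have "\<dots> = integral\<^sup>L \<mu> (\<lambda>U. T_op \<mu> t is js)"
  proof (rule integral_cong_AE)
    show "(\<lambda>U. \<Sum>ks\<in>idx t. tensor_entry t (adjoint U) is ks * T_op \<mu> t ks js) \<in> borel_measurable \<mu>"
      using m2 by measurable
    show "(\<lambda>U. T_op \<mu> t is js) \<in> borel_measurable \<mu>" by simp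
    show "AE U in \<mu>. (\<Sum>ks\<in>idx t. tensor_entry t (adjoint U) is ks * T_op \<mu> t ks js) = T_op \<mu> t is js"
      using haar_basic(3)[OF assms] by eventually_elim (rule haar_left[OF assms unitary_adjoint])
  qed
  also have "\<dots> = T_op \<mu> t is js" using prob_space by simp
  finally show ?thesis .
qed



lemma integral_unif:
  fixes f :: "'d::finite cmat \<Rightarrow> complex"
  assumes "finite G" "G \<noteq> {}"
  shows "integral\<^sup>L (measure_pmf (unif G)) f = (\<Sum>U\<in>G. f U) / of_nat (card G)"
proof -
  have "integral\<^sup>L (measure_pmf (unif G)) f = (\<Sum>a\<in>G. pmf (unif G) a *\<^sub>R f a)"
    by (rule integral_measure_pmf[OF assms(1)]) (simp add: unif_def assms)
  also have "\<dots> = (\<Sum>a\<in>G. f a / of_nat (card G))"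
    by (intro sum.cong) (simp_all add: unif_def assms scaleR_conv_of_real)
  finally show ?thesis by (simp add: sum_divide_distrib)
qed

lemma integral_conv:
  fixes f :: "'d::finite cmat \<Rightarrow> complex"
  assumes "finite G" "G \<noteq> {}" "finite H" "H \<noteq> {}"
  shows "integral\<^sup>L (measure_pmf (conv (unif G) (unif H))) f
        = (\<Sum>U\<in>G. \<Sum>V\<in>H. f (U ** V)) / (of_nat (card G) * of_nat (card H))"
proof -
  have "integral\<^sup>L (measure_pmf (conv (unif G) (unif H))) f
      = integral\<^sup>L (measure_pmf (pair_pmf (unif G) (unif H))) (\<lambda>p. f (fst p ** snd p))"
    unfolding conv_def by (simp add: case_prod_beta)
  also have "\<dots> = (\<Sum>p\<in>G \<times> H. pmf (pair_pmf (unif G) (unif H)) p *\<^sub>R f (fst p ** snd p))"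
    by (rule integral_measure_pmf) (auto simp: unif_def assms)
  also have "\<dots> = (\<Sum>p\<in>G \<times> H. f (fst p ** snd p) / (of_nat (card G) * of_nat (card H)))"
    by (intro sum.cong) (auto simp: unif_def assms scaleR_conv_of_real pmf_pair)
  also have "\<dots> = (\<Sum>U\<in>G. \<Sum>V\<in>H. f (U ** V) / (of_nat (card G) * of_nat (card H)))"
    by (simp add: sum.cartesian_product case_prod_beta)
  finally show ?thesis by (simp add: sum_divide_distrib)
qed

lemma vn_add: "vn I (\<lambda>i. a i + b i) \<le> vn I a + vn I b"
proof -
  have "vn I (\<lambda>i. a i + b i) \<le> L2_set (\<lambda>i. cmod (a i) + cmod (b i)) I"
    unfolding vn_def by (rule L2_set_mono) (simp_all add: norm_triangle_ineq)
  also have "\<dots> \<le> vn I a + vn I b"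
    unfolding vn_def by (rule L2_set_triangle_ineq)
  finally show ?thesis .
qed

lemma vn_sum:
  assumes "finite G"
  shows "vn I (\<lambda>i. \<Sum>U\<in>G. w U i) \<le> (\<Sum>U\<in>G. vn I (w U))"
  using assms
proof (induction G rule: finite_induct)
  case empty
  then show ?case by (simp add: vn_def L2_set_0')
next
  case (insert x F)
  have "vn I (\<lambda>i. \<Sum>U\<in>insert x F. w U i) = vn I (\<lambda>i. w x i + (\<Sum>U\<in>F. w U i))"
    using insert by simp
  also have "\<dots> \<le> vn I (w x) + vn I (\<lambda>i. \<Sum>U\<in>F. w U i)" by (rule vn_add)
  also have "\<dots> \<le> vn I (w x) + (\<Sum>U\<in>F. vn I (w U))" using insert by simp
  finally show ?case using insert by simp
qed

lemma tensor_isometry: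
  assumes "U \<in> unitary_group"
  shows "vn (idx t) (mv (idx t) (\<lambda>is js. tensor_entry t U is js) v) = vn (idx t) v"
proof -
  define I where "I = (idx t :: 'a list set)"
  define X where "X = (\<lambda>is js. tensor_entry t U is js)"
  have fin: "finite I" unfolding I_def by (rule finite_idx)
  have mmX: "mm I (adj X) X xs ys = (if xs = ys then 1 else 0)" if "xs \<in> I" "ys \<in> I" for xs ys
  proof -
    have "mm I (adj X) X xs ys = tensor_entry t (adjoint U ** U) xs ys"
      unfolding mm_def adj_def X_def tensor_mult I_def
      by (intro sum.cong) (simp_all add: tensor_adj)
    also have "\<dots> = (if xs = ys then 1 else 0)"
      unfolding unitary_left[OF assms] using that unfolding I_def by (rule tensor_id)
    finally show ?thesis .
  qed
  have mvv: "mv I (mm I (adj X) X) v i = v i" if "i \<in> I" for i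
  proof -
    have "mv I (mm I (adj X) X) v i = (\<Sum>j\<in>I. if i = j then v j else 0)"
      unfolding mv_def using mmX that by (intro sum.cong) auto
    also have "\<dots> = v i" using that fin by simp
    finally show ?thesis .
  qed
  have "ip I (mv I X v) (mv I X v) = ip I v (mv I (adj X) (mv I X v))"
    by (rule ip_adj[OF fin])
  also have "\<dots> = ip I v (mv I (mm I (adj X) X) v)" by (simp add: mv_mm fin)
  also have "\<dots> = ip I v v" using mvv by (intro ip_cong) auto
  finally have "(of_real ((vn I (mv I X v))\<^sup>2) :: complex) = of_real ((vn I v)\<^sup>2)"
    unfolding ip_self .
  then have "(vn I (mv I X v))\<^sup>2 = (vn I v)\<^sup>2" by (simp only: of_real_eq_iff)
  then show ?thesis unfolding I_def X_def by simp
qed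



theorem lemma4:
  fixes G :: "(complex^'d::finite^'d) set" and \<mu> :: "(complex^'d^'d) measure" and t :: nat
  assumes "finite G" and "G \<noteq> {}" and "G \<subseteq> unitary_group"
    and "is_haar \<mu>" and "t > 0"
  shows "(delta \<mu> (measure_pmf (unif G)) t)\<^sup>2
           = delta \<mu> (measure_pmf (conv (unif G) (unif (adjoint ` G)))) t
       \<and> gap \<mu> (measure_pmf (conv (unif G) (unif (adjoint ` G)))) t / 2
           \<le> gap \<mu> (measure_pmf (unif G)) t
       \<and> gap \<mu> (measure_pmf (unif G)) t
           \<le> gap \<mu> (measure_pmf (conv (unif G) (unif (adjoint ` G)))) t"
proof -
  define I where "I = (idx t :: 'd list set)"
  have fin: "finite I" unfolding I_def by (rule finite_idx)
  define c where "c = (of_nat (card G) :: complex)"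
  have cpos: "card G > 0" using assms(1,2) by (simp add: card_gt_0_iff)
  then have c0: "c \<noteq> 0" unfolding c_def by simp
  have cc: "cnj c = c" unfolding c_def by simp
  define A where "A = (\<lambda>xs ys. T_op (measure_pmf (unif G)) t xs ys)"
  define P where "P = (\<lambda>xs ys. T_op \<mu> t xs ys)"
  define Tc where "Tc = (\<lambda>xs ys. T_op (measure_pmf (conv (unif G) (unif (adjoint ` G)))) t xs ys)"
  have Aeq: "A xs ys = (\<Sum>U\<in>G. tensor_entry t U xs ys) / c" for xs ys
    unfolding A_def T_op_def c_def by (rule integral_unif[OF assms(1,2)])
  have cA: "cnj (A ys ks) = (\<Sum>U\<in>G. tensor_entry t (adjoint U) ks ys) / c" for ys ks
    unfolding Aeq using cc by (simp add: tensor_adj)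
  have inj: "inj_on adjoint G" by (metis adjoint_adjoint inj_on_def)
  have Hfin: "finite (adjoint ` G)" "adjoint ` G \<noteq> {}" "card (adjoint ` G) = card G"
    using assms(1,2) inj by (simp_all add: card_image)
  have unit: "U \<in> unitary_group" if "U \<in> G" for U using assms(3) that by auto
  have Tceq: "Tc xs ys = (\<Sum>U\<in>G. \<Sum>W\<in>G. tensor_entry t (U ** adjoint W) xs ys) / (c * c)" for xs ys
  proof -
    have "Tc xs ys = (\<Sum>U\<in>G. \<Sum>V\<in>adjoint ` G. tensor_entry t (U ** V) xs ys) / (c * c)"
      unfolding Tc_def T_op_def c_def
      using integral_conv[OF assms(1,2) Hfin(1,2)] Hfin(3) by simp
    also have "\<dots> = (\<Sum>U\<in>G. \<Sum>W\<in>G. tensor_entry t (U ** adjoint W) xs ys) / (c * c)"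
      by (simp add: sum.reindex[OF inj])
    finally show ?thesis .
  qed
  have TcA: "Tc xs ys = mm I A (adj A) xs ys" for xs ys
  proof -
    have "mm I A (adj A) xs ys = (\<Sum>ks\<in>I. (\<Sum>U\<in>G. tensor_entry t U xs ks) * (\<Sum>W\<in>G. tensor_entry t (adjoint W) ks ys)) / (c * c)"
      unfolding mm_def adj_def cA by (simp add: Aeq sum_divide_distrib[symmetric] times_divide_times_eq)
    also have "(\<Sum>ks\<in>I. (\<Sum>U\<in>G. tensor_entry t U xs ks) * (\<Sum>W\<in>G. tensor_entry t (adjoint W) ks ys))
        = (\<Sum>ks\<in>I. \<Sum>U\<in>G. \<Sum>W\<in>G. tensor_entry t U xs ks * tensor_entry t (adjoint W) ks ys)"
      by (simp add: sum_product)
    also have "\<dots> = (\<Sum>U\<in>G. \<Sum>ks\<in>I. \<Sum>W\<in>G. tensor_entry t U xs ks * tensor_entry t (adjoint W) ks ys)"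
      by (rule sum.swap)
    also have "\<dots> = (\<Sum>U\<in>G. \<Sum>W\<in>G. \<Sum>ks\<in>I. tensor_entry t U xs ks * tensor_entry t (adjoint W) ks ys)"
      by (rule sum.cong[OF refl], rule sum.swap)
    also have "\<dots> = (\<Sum>U\<in>G. \<Sum>W\<in>G. tensor_entry t (U ** adjoint W) xs ys)"
      unfolding I_def tensor_mult ..
    finally show ?thesis using Tceq by simp
  qed
  have PP: "mm I (adj P) P xs ys = P xs ys" for xs ys
    unfolding mm_def adj_def P_def I_def by (rule haar_PP[OF assms(4)])
  have AP: "mm I A P xs ys = P xs ys" for xs ys
  proof -
    have "mm I A P xs ys = (\<Sum>ks\<in>I. (\<Sum>U\<in>G. tensor_entry t U xs ks) * P ks ys) / c"
      unfolding mm_def Aeq by (simp only: times_divide_eq_left sum_divide_distrib[symmetric])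
    also have "(\<Sum>ks\<in>I. (\<Sum>U\<in>G. tensor_entry t U xs ks) * P ks ys)
        = (\<Sum>ks\<in>I. \<Sum>U\<in>G. tensor_entry t U xs ks * P ks ys)"
      by (simp add: sum_distrib_right)
    also have "\<dots> = (\<Sum>U\<in>G. \<Sum>ks\<in>I. tensor_entry t U xs ks * P ks ys)"
      by (rule sum.swap)
    also have "\<dots> = (\<Sum>U\<in>G. P xs ys)"
      unfolding P_def I_def using haar_left[OF assms(4) unit] by (intro sum.cong) auto
    finally show ?thesis using c0 unfolding c_def by simp
  qed
  have PA: "mm I P (adj A) xs ys = P xs ys" for xs ys
  proof -
    have "mm I P (adj A) xs ys = (\<Sum>ks\<in>I. P xs ks * (\<Sum>U\<in>G. tensor_entry t (adjoint U) ks ys)) / c"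
      unfolding mm_def adj_def cA by (simp only: times_divide_eq_right sum_divide_distrib[symmetric])
    also have "(\<Sum>ks\<in>I. P xs ks * (\<Sum>U\<in>G. tensor_entry t (adjoint U) ks ys))
        = (\<Sum>ks\<in>I. \<Sum>U\<in>G. P xs ks * tensor_entry t (adjoint U) ks ys)"
      by (simp add: sum_distrib_left)
    also have "\<dots> = (\<Sum>U\<in>G. \<Sum>ks\<in>I. P xs ks * tensor_entry t (adjoint U) ks ys)"
      by (rule sum.swap)
    also have "\<dots> = (\<Sum>U\<in>G. P xs ys)"
      unfolding P_def I_def using haar_right[OF assms(4) unitary_adjoint[OF unit]] by (intro sum.cong) auto
    finally show ?thesis using c0 unfolding c_def by simp
  qed
  have Ac: "vn I (mv I A v) \<le> vn I v" for v
  proof -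
    define w where "w = (\<lambda>U i. mv I (\<lambda>xs ys. tensor_entry t U xs ys) v i)"
    have mvA: "mv I A v i = of_real (1 / real (card G)) * (\<Sum>U\<in>G. w U i)" for i
    proof -
      have "mv I A v i = (\<Sum>j\<in>I. (\<Sum>U\<in>G. tensor_entry t U i j) * v j) / c"
        unfolding mv_def Aeq by (simp only: times_divide_eq_left sum_divide_distrib[symmetric])
      also have "(\<Sum>j\<in>I. (\<Sum>U\<in>G. tensor_entry t U i j) * v j) = (\<Sum>j\<in>I. \<Sum>U\<in>G. tensor_entry t U i j * v j)"
        by (simp add: sum_distrib_right)
      also have "\<dots> = (\<Sum>U\<in>G. w U i)"
        unfolding w_def mv_def by (rule sum.swap)
      finally show ?thesis unfolding c_def by simp
    qed
    have "mv I A v = (\<lambda>i. of_real (1 / real (card G)) * (\<Sum>U\<in>G. w U i))"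
      by (rule ext) (rule mvA)
    then have "vn I (mv I A v) = vn I (\<lambda>i. of_real (1 / real (card G)) * (\<Sum>U\<in>G. w U i))"
      by simp
    also have "\<dots> = (1 / real (card G)) * vn I (\<lambda>i. \<Sum>U\<in>G. w U i)"
      by (subst vn_scale) simp
    also have "\<dots> \<le> (1 / real (card G)) * (\<Sum>U\<in>G. vn I (w U))"
      by (intro mult_left_mono vn_sum assms(1)) simp
    also have "(\<Sum>U\<in>G. vn I (w U)) = (\<Sum>U\<in>G. vn I v)"
      unfolding w_def I_def using tensor_isometry[OF unit] by (intro sum.cong) auto
    also have "(1 / real (card G)) * \<dots> = vn I v" using cpos by simp
    finally show ?thesis .
  qed
  have main: "(op_norm I (\<lambda>i j. A i j - P i j))\<^sup>2 = op_norm I (\<lambda>i j. mm I A (adj A) i j - P i j)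
         \<and> op_norm I (\<lambda>i j. A i j - P i j) \<le> 1"
    by (rule proj_main[OF fin PP AP PA Ac])
  have d1: "delta \<mu> (measure_pmf (unif G)) t = op_norm I (\<lambda>i j. A i j - P i j)"
    unfolding delta_def A_def P_def I_def ..
  have d2: "delta \<mu> (measure_pmf (conv (unif G) (unif (adjoint ` G)))) t
      = op_norm I (\<lambda>i j. mm I A (adj A) i j - P i j)"
    unfolding delta_def I_def[symmetric] using TcA unfolding Tc_def P_def
    by (intro op_norm_cong) simp
  define d where "d = delta \<mu> (measure_pmf (unif G)) t"
  have d0: "0 \<le> d" unfolding d_def d1 by (rule op_norm_nonneg[OF fin])
  have d_le: "d \<le> 1" unfolding d_def d1 using main by simp
  have dsq: "delta \<mu> (measure_pmf (conv (unif G) (unif (adjoint ` G)))) t = d\<^sup>2"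
    unfolding d_def d1 d2 using main by simp
  have "(1 - d\<^sup>2) / 2 \<le> 1 - d"
  proof -
    have "0 \<le> (1 - d)\<^sup>2" by simp
    then show ?thesis by (simp add: power2_eq_square field_simps)
  qed
  moreover have "1 - d \<le> 1 - d\<^sup>2"
  proof -
    have "d * d \<le> 1 * d" using d0 d_le by (intro mult_right_mono) simp_all
    then show ?thesis by (simp add: power2_eq_square)
  qed
  ultimately show ?thesis unfolding gap_def dsq d_def[symmetric] by simp
qed

end
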